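(* Consider the LPP model where $(x_k(0))_{k\in\mathbb{Z}}$ are integers with $x_{k+1}(0)<x_k(0)$ for all $k$, $x_0(0)=1$, $x_1(0)<-1$, and $\omega_{i,j}$ are independent exponential random variables with rate $v_j>0$. Let $\phi_n=(I_n,J_n)$ be its competition interface. Let $n,M\in\mathbb{N}$ with $M\le n-1$. Then $$\mathbb{P}\big((M,n-M)\in\Gamma_-^\infty\big)\le\mathbb{P}\big(I_n-J_n\le -n+2M\big)\le\mathbb{P}\big((M+1,n-M-1)\in\Gamma_-^\infty\big).$$
   Context: LPP: for independent nonnegative $\{\omega_{i,j}\}$, an up-right path is a sequence of points of $\mathbb{Z}^2$ with increments in $\{(1,0),(0,1)\}$; $L_{S_A\to S_E}=\max_\pi\sum_{(i,j)\in\pi\setminus S_A}\omega_{i,j}$ over up-right paths starting in $S_A$ and ending in $S_E$ ($-\infty$ if none). $\mathcal{L}^+=\{(k+x_k(0),k):k>0\}$, $\mathcal{L}^-=\{(k+x_k(0),k):k\le0\}$. $\Gamma_+^\infty=\{(i,j):L_{\mathcal{L}^+\to(i,j)}>L_{\mathcal{L}^-\to(i,j)}\}$, $\Gamma_-^\infty=\{(i,j):L_{\mathcal{L}^-\to(i,j)}>L_{\mathcal{L}^+\to(i,j)}\}$. Competition interface: $\phi_0=(0,0)$, $\phi_{n+1}=\phi_n+(1,0)$ if $\phi_n+(1,1)\in\Gamma_+^\infty$, $\phi_{n+1}=\phi_n+(0,1)$ if $\phi_n+(1,1)\in\Gamma_-^\infty$, and $\phi_n=(I_n,J_n)$. *)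

theory Defs
  imports "HOL-Probability.Probability"
begin

type_synonym pt = "int \<times> int"

definition up_right_path :: "pt list \<Rightarrow> bool" where
  "up_right_path p \<longleftrightarrow> p \<noteq> [] \<and>
     (\<forall>i. Suc i < length p \<longrightarrow>
        p ! Suc i = (fst (p ! i) + 1, snd (p ! i)) \<or> p ! Suc i = (fst (p ! i), snd (p ! i) + 1))"

text \<open>Last passage value L from S_A to S_E for a weight configuration w
  (supremum in the extended reals; the supremum of the empty set is minus infinity).\<close>
definition LPP :: "(pt \<Rightarrow> real) \<Rightarrow> pt set \<Rightarrow> pt set \<Rightarrow> ereal" where
  "LPP w SA SE = (SUP p \<in> {p. up_right_path p \<and> hd p \<in> SA \<and> last p \<in> SE}.
                     ereal (\<Sum>q \<in> set p - SA. w q))"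

definition Lplus :: "(int \<Rightarrow> int) \<Rightarrow> pt set" where
  "Lplus x = {(k + x k, k) | k. k > 0}"

definition Lminus :: "(int \<Rightarrow> int) \<Rightarrow> pt set" where
  "Lminus x = {(k + x k, k) | k. k \<le> 0}"

definition Gamma_plus :: "(int \<Rightarrow> int) \<Rightarrow> (pt \<Rightarrow> real) \<Rightarrow> pt set" where
  "Gamma_plus x w = {q. LPP w (Lplus x) {q} > LPP w (Lminus x) {q}}"

definition Gamma_minus :: "(int \<Rightarrow> int) \<Rightarrow> (pt \<Rightarrow> real) \<Rightarrow> pt set" where
  "Gamma_minus x w = {q. LPP w (Lminus x) {q} > LPP w (Lplus x) {q}}"

text \<open>Competition interface. If phi n + (1,1) lies in neither Gamma set (a tie, which
  the informal definition leaves undefined), we conventionally step by (0,1).\<close>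
primrec comp_interface :: "(int \<Rightarrow> int) \<Rightarrow> (pt \<Rightarrow> real) \<Rightarrow> nat \<Rightarrow> pt" where
  "comp_interface x w 0 = (0, 0)"
| "comp_interface x w (Suc n) =
     (let (a, b) = comp_interface x w n in
      if (a + 1, b + 1) \<in> Gamma_plus x w then (a + 1, b)
      else (a, b + 1))"

end

theory Submission
  imports Defs
begin

definition ple :: "pt \<Rightarrow> pt \<Rightarrow> bool" where
  "ple a b \<longleftrightarrow> fst a \<le> fst b \<and> snd a \<le> snd b"

lemma path_step:
  assumes "up_right_path p" "Suc i < length p"
  shows "p ! Suc i = (fst (p ! i) + 1, snd (p ! i)) \<or> p ! Suc i = (fst (p ! i), snd (p ! i) + 1)"
  using assms unfolding up_right_path_def by blast

lemma path_mono:
  assumes "up_right_path p" "i \<le> j" "j < length p"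
  shows "ple (p ! i) (p ! j) \<and> fst (p!j) + snd (p!j) = fst (p!i) + snd (p!i) + int (j - i)"
  using assms(2,3)
proof (induction j)
  case 0 then show ?case by (simp add: ple_def)
next
  case (Suc j)
  show ?case
  proof (cases "i = Suc j")
    case True then show ?thesis by (simp add: ple_def)
  next
    case False
    then have "i \<le> j" "j < length p" using Suc by auto
    with Suc.IH have ih: "ple (p ! i) (p ! j) \<and> fst (p!j) + snd (p!j) = fst (p!i) + snd (p!i) + int (j - i)" by blast
    from path_step[OF assms(1) Suc.prems(2)] ih \<open>i \<le> j\<close> show ?thesis
      by (auto simp: ple_def Suc_diff_le)
  qed
qed

lemma path_hd_le:
  assumes "up_right_path p" "q \<in> set p"
  shows "ple (hd p) q"
proof -
  from assms(2) obtain j where j: "j < length p" "q = p ! j" by (auto simp: in_set_conv_nth)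
  have "p \<noteq> []" using assms(1) by (simp add: up_right_path_def)
  then have "hd p = p ! 0" by (simp add: hd_conv_nth)
  with path_mono[OF assms(1), of 0 j] j show ?thesis by simp
qed

lemma path_le_last:
  assumes "up_right_path p" "q \<in> set p"
  shows "ple q (last p) \<and> fst q + snd q \<le> fst (last p) + snd (last p)"
proof -
  from assms(2) obtain j where j: "j < length p" "q = p ! j" by (auto simp: in_set_conv_nth)
  have "p \<noteq> []" using assms(1) by (simp add: up_right_path_def)
  then have "last p = p ! (length p - 1)" by (simp add: last_conv_nth)
  with path_mono[OF assms(1), of j "length p - 1"] j show ?thesis by simp
qed

lemma path_le_last_strict:
  assumes "up_right_path p" "q \<in> set (butlast p)"
  shows "fst q + snd q < fst (last p) + snd (last p)"
proof -
  from assms(2) obtain j where j: "j < length p - 1" "q = p ! j"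
    by (auto simp: in_set_conv_nth nth_butlast)
  have "p \<noteq> []" using assms(1) by (simp add: up_right_path_def)
  then have "last p = p ! (length p - 1)" by (simp add: last_conv_nth)
  with path_mono[OF assms(1), of j "length p - 1"] j show ?thesis by simp
qed

lemma up_right_path_snoc:
  assumes "p' \<noteq> []"
  shows "up_right_path (p' @ [q]) \<longleftrightarrow> up_right_path p' \<and>
     (q = (fst (last p') + 1, snd (last p')) \<or> q = (fst (last p'), snd (last p') + 1))"
proof -
  have L: "last p' = p' ! (length p' - 1)" using assms by (simp add: last_conv_nth)
  show ?thesis
  proof
    assume H: "up_right_path (p' @ [q])"
    have "up_right_path p'"
      unfolding up_right_path_def
    proof (intro conjI allI impI)
      show "p' \<noteq> []" by fact
      fix i assume "Suc i < length p'"
      with path_step[OF H, of i] show "p' ! Suc i = (fst (p' ! i) + 1, snd (p' ! i)) \<or> p' ! Suc i = (fst (p' ! i), snd (p' ! i) + 1)"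
        by (simp add: nth_append)
    qed
    moreover have "Suc (length p' - 1) < length (p' @ [q])" using assms by simp
    from path_step[OF H this] assms
    have "q = (fst (last p') + 1, snd (last p')) \<or> q = (fst (last p'), snd (last p') + 1)"
      by (simp add: nth_append L)
    ultimately show "up_right_path p' \<and> (q = (fst (last p') + 1, snd (last p')) \<or> q = (fst (last p'), snd (last p') + 1))" by blast
  next
    assume H: "up_right_path p' \<and> (q = (fst (last p') + 1, snd (last p')) \<or> q = (fst (last p'), snd (last p') + 1))"
    show "up_right_path (p' @ [q])"
      unfolding up_right_path_def
    proof (intro conjI allI impI)
      show "p' @ [q] \<noteq> []" by simp
      fix i assume i: "Suc i < length (p' @ [q])"
      show "(p' @ [q]) ! Suc i = (fst ((p' @ [q]) ! i) + 1, snd ((p' @ [q]) ! i)) \<or>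
            (p' @ [q]) ! Suc i = (fst ((p' @ [q]) ! i), snd ((p' @ [q]) ! i) + 1)"
      proof (cases "Suc i < length p'")
        case True
        with H path_step[of p' i] show ?thesis by (simp add: nth_append)
      next
        case False
        then have "i = length p' - 1" "Suc i = length p'" using i assms by auto
        with H L show ?thesis by (simp add: nth_append)
      qed
    qed
  qed
qed

definition Paths :: "pt set \<Rightarrow> pt \<Rightarrow> pt list set" where
  "Paths SA q = {p. up_right_path p \<and> hd p \<in> SA \<and> last p \<in> {q}}"

definition pval :: "(pt \<Rightarrow> real) \<Rightarrow> pt set \<Rightarrow> pt list \<Rightarrow> real" where
  "pval w SA p = (\<Sum>q \<in> set p - SA. w q)"

lemma LPP_alt: "LPP w SA {q} = (SUP p \<in> Paths SA q. ereal (pval w SA p))"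
  unfolding LPP_def Paths_def pval_def by simp

lemma LPP_ge:
  assumes "up_right_path p" "hd p \<in> SA" "last p = q"
  shows "ereal (pval w SA p) \<le> LPP w SA {q}"
  unfolding LPP_alt by (rule SUP_upper) (use assms in \<open>auto simp: Paths_def\<close>)

lemma LPP_unreach:
  assumes "\<not> (\<exists>s\<in>SA. ple s q)"
  shows "LPP w SA {q} = -\<infinity>"
proof -
  have "Paths SA q = {}"
  proof (rule ccontr)
    assume "Paths SA q \<noteq> {}"
    then obtain p where p: "up_right_path p" "hd p \<in> SA" "last p = q" by (auto simp: Paths_def)
    then have "p \<noteq> []" by (simp add: up_right_path_def)
    then have "last p \<in> set p" by simp
    then have "ple (hd p) q" using path_hd_le[OF p(1)] p(3) by blast
    with p(2) assms show False by blast
  qed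
  then show ?thesis unfolding LPP_alt by (simp add: bot_ereal_def)
qed

lemma LPP_local:
  assumes "\<And>r. (\<exists>s\<in>SA. ple s r) \<Longrightarrow> ple r q \<Longrightarrow> w r = w' r"
  shows "LPP w SA {q} = LPP w' SA {q}"
  unfolding LPP_alt
proof (rule SUP_cong[OF refl])
  fix p assume "p \<in> Paths SA q"
  then have p: "up_right_path p" "hd p \<in> SA" "last p = q" by (auto simp: Paths_def)
  have "pval w SA p = pval w' SA p" unfolding pval_def
  proof (rule sum.cong[OF refl])
    fix r assume "r \<in> set p - SA"
    then have "r \<in> set p" by simp
    then have "ple (hd p) r" "ple r q" using path_hd_le[OF p(1)] path_le_last[OF p(1)] p(3) by blast+
    then show "w r = w' r" using p(2) by (intro assms) auto
  qed
  then show "ereal (pval w SA p) = ereal (pval w' SA p)" by simp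
qed

lemma pval_snoc:
  assumes "up_right_path p'" "fst q + snd q = fst (last p') + snd (last p') + 1" "q \<notin> SA"
  shows "pval w SA (p' @ [q]) = w q + pval w SA p'"
proof -
  have "q \<notin> set p'" using path_le_last[OF assms(1)] assms(2) by fastforce
  then have "set (p' @ [q]) - SA = insert q (set p' - SA)" "q \<notin> set p' - SA" using assms(3) by auto
  then show ?thesis unfolding pval_def by simp
qed

lemma Paths_snoc_decomp:
  assumes "p \<in> Paths SA q" "q \<notin> SA"
  shows "\<exists>p'. p = p' @ [q] \<and> up_right_path p' \<and> hd p' \<in> SA \<and>
     (last p' = (fst q - 1, snd q) \<or> last p' = (fst q, snd q - 1)) \<and>
     pval w SA p = w q + pval w SA p'"
proof -
  from assms have p: "up_right_path p" "hd p \<in> SA" "last p = q" by (auto simp: Paths_def)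
  then have "p \<noteq> []" by (simp add: up_right_path_def)
  define p' where "p' = butlast p"
  have pq: "p = p' @ [q]" using \<open>p \<noteq> []\<close> p(3) unfolding p'_def by (metis append_butlast_last_id)
  have "p' \<noteq> []"
  proof
    assume "p' = []" then have "p = [q]" using pq by simp
    with p(2) assms(2) show False by simp
  qed
  from up_right_path_snoc[OF this, of q] p(1) pq
  have H: "up_right_path p'" "q = (fst (last p') + 1, snd (last p')) \<or> q = (fst (last p'), snd (last p') + 1)" by auto
  have hd: "hd p' \<in> SA" using p(2) pq \<open>p' \<noteq> []\<close> by simp
  have "pval w SA p = w q + pval w SA p'"
    unfolding pq by (rule pval_snoc[OF H(1) _ assms(2)]) (use H(2) in auto)
  with H hd pq show ?thesis by (intro exI[of _ p']) auto
qed

lemma LPP_rec: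
  assumes "q \<notin> SA"
  shows "LPP w SA {q} = ereal (w q) + max (LPP w SA {(fst q - 1, snd q)}) (LPP w SA {(fst q, snd q - 1)})"
    (is "?L = ereal (w q) + max ?A ?B")
proof (rule antisym)
  show "?L \<le> ereal (w q) + max ?A ?B"
    unfolding LPP_alt[of w SA q]
  proof (rule SUP_least)
    fix p assume "p \<in> Paths SA q"
    from Paths_snoc_decomp[OF this assms, of w] obtain p' where
      p': "p = p' @ [q]" "up_right_path p'" "hd p' \<in> SA"
      "last p' = (fst q - 1, snd q) \<or> last p' = (fst q, snd q - 1)"
      "pval w SA p = w q + pval w SA p'" by blast
    have "ereal (pval w SA p') \<le> max ?A ?B"
      using p'(4) LPP_ge[OF p'(2,3), of _ w] by (auto intro: le_max_iff_disj[THEN iffD2])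
    then have "ereal (w q) + ereal (pval w SA p') \<le> ereal (w q) + max ?A ?B"
      by (rule add_left_mono)
    then show "ereal (pval w SA p) \<le> ereal (w q) + max ?A ?B" using p'(5) by simp
  qed
next
  have *: "ereal (w q) + LPP w SA {r} \<le> ?L" if r: "r = (fst q - 1, snd q) \<or> r = (fst q, snd q - 1)" for r
  proof -
    have "LPP w SA {r} \<le> ?L - ereal (w q)"
      unfolding LPP_alt[of w SA r]
    proof (rule SUP_least)
      fix p' assume "p' \<in> Paths SA r"
      then have p': "up_right_path p'" "hd p' \<in> SA" "last p' = r" by (auto simp: Paths_def)
      then have ne: "p' \<noteq> []" by (simp add: up_right_path_def)
      have P: "up_right_path (p' @ [q])" using up_right_path_snoc[OF ne, of q] p' r by (cases q) auto
      have "pval w SA (p' @ [q]) = w q + pval w SA p'"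
        by (rule pval_snoc[OF p'(1) _ assms]) (use p' r in auto)
      moreover have "ereal (pval w SA (p' @ [q])) \<le> ?L"
        by (rule LPP_ge[OF P]) (use p' ne in auto)
      ultimately have "ereal (pval w SA p') + ereal (w q) \<le> ?L" by (simp add: add.commute)
      then show "ereal (pval w SA p') \<le> ?L - ereal (w q)" by (simp add: ereal_le_minus)
    qed
    then have "LPP w SA {r} + ereal (w q) \<le> ?L" by (simp add: ereal_le_minus)
    then show ?thesis by (simp add: add.commute)
  qed
  have "ereal (w q) + max ?A ?B = max (ereal (w q) + ?A) (ereal (w q) + ?B)"
    by (simp add: max_def add_left_mono antisym)
  also have "\<dots> \<le> ?L" using *[of "(fst q - 1, snd q)"] *[of "(fst q, snd q - 1)"] by simp
  finally show "ereal (w q) + max ?A ?B \<le> ?L" .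
qed

lemma plus_max_gt:
  fixes A B :: ereal
  assumes "-\<infinity> < A \<or> -\<infinity> < B"
  shows "-\<infinity> < ereal c + max A B"
proof -
  have "-\<infinity> < max A B" using assms by (auto simp: less_max_iff_disj)
  then show ?thesis by (cases "max A B") auto
qed

lemma LPP_measurable:
  assumes "\<And>q. (\<lambda>y. g q y) \<in> borel_measurable N"
  shows "(\<lambda>y. LPP (\<lambda>q. g q y) SA {p}) \<in> borel_measurable N"
  unfolding LPP_alt
  by (rule borel_measurable_SUP)
     (auto simp: pval_def intro!: borel_measurable_ereal borel_measurable_sum assms countable_subset[OF subset_UNIV])

lemma Gplus_sets:
  assumes "\<And>q. W q \<in> borel_measurable M"
  shows "{\<omega> \<in> space M. c \<in> Gamma_plus x (\<lambda>q. W q \<omega>)} \<in> sets M"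
  unfolding Gamma_plus_def mem_Collect_eq
  by (intro borel_measurable_less LPP_measurable assms)

lemma Gminus_sets:
  assumes "\<And>q. W q \<in> borel_measurable M"
  shows "{\<omega> \<in> space M. c \<in> Gamma_minus x (\<lambda>q. W q \<omega>)} \<in> sets M"
  unfolding Gamma_minus_def mem_Collect_eq
  by (intro borel_measurable_less LPP_measurable assms)

lemma ci_measurable:
  assumes "\<And>q. W q \<in> borel_measurable M"
  shows "(\<lambda>\<omega>. comp_interface x (\<lambda>q. W q \<omega>) n) \<in> measurable M (count_space UNIV)"
proof (induction n)
  case 0 then show ?case by simp
next
  case (Suc n)
  have eq: "(\<lambda>\<omega>. comp_interface x (\<lambda>q. W q \<omega>) (Suc n)) =
    (\<lambda>\<omega>. (\<lambda>c \<omega>. if (fst c + 1, snd c + 1) \<in> Gamma_plus x (\<lambda>q. W q \<omega>)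
       then (fst c + 1, snd c) else (fst c, snd c + 1)) (comp_interface x (\<lambda>q. W q \<omega>) n) \<omega>)"
    by (simp add: Let_def split_beta)
  show ?case unfolding eq
    by (rule measurable_compose_countable'[OF _ Suc.IH])
       (auto intro!: measurable_If Gplus_sets assms)
qed

lemma ci_event_sets:
  assumes "\<And>q. W q \<in> borel_measurable M"
  shows "{\<omega> \<in> space M. P (comp_interface x (\<lambda>q. W q \<omega>) n)} \<in> sets M"
proof -
  have "{\<omega> \<in> space M. P (comp_interface x (\<lambda>q. W q \<omega>) n)} =
     (\<lambda>\<omega>. comp_interface x (\<lambda>q. W q \<omega>) n) -` {c. P c} \<inter> space M" by auto
  also have "\<dots> \<in> sets M" by (rule measurable_sets[OF ci_measurable[OF assms]]) simp
  finally show ?thesis .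
qed

lemma (in prob_space) no_tie:
  fixes X Y :: "'a \<Rightarrow> real"
  assumes ind: "indep_var borel X borel Y"
    and atom: "\<And>c. emeasure M {\<omega> \<in> space M. Y \<omega> = c} = 0"
  shows "AE \<omega> in M. X \<omega> \<noteq> Y \<omega>"
proof -
  have rvX: "X \<in> borel_measurable M" and rvY: "Y \<in> borel_measurable M"
    and eq: "distr M borel X \<Otimes>\<^sub>M distr M borel Y = distr M (borel \<Otimes>\<^sub>M borel) (\<lambda>x. (X x, Y x))"
    using ind unfolding indep_var_distribution_eq by auto
  define D where "D = {p :: real \<times> real. fst p = snd p}"
  have "closed D" unfolding D_def by (intro closed_Collect_eq continuous_intros)
  then have Db: "D \<in> sets (borel \<Otimes>\<^sub>M borel)" unfolding borel_prod by simp
  have Db': "D \<in> sets (distr M borel X \<Otimes>\<^sub>M distr M borel Y)"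
    using Db by (simp cong: sets_pair_measure_cong)
  interpret P: prob_space "distr M borel Y" by (rule prob_space_distr[OF rvY])
  have meas: "{\<omega> \<in> space M. X \<omega> = Y \<omega>} \<in> sets M" using rvX rvY by measurable
  have "emeasure M {\<omega> \<in> space M. X \<omega> = Y \<omega>} = emeasure M ((\<lambda>x. (X x, Y x)) -` D \<inter> space M)"
    by (rule arg_cong[where f="emeasure M"]) (auto simp: D_def)
  also have "\<dots> = emeasure (distr M (borel \<Otimes>\<^sub>M borel) (\<lambda>x. (X x, Y x))) D"
    by (rule emeasure_distr[symmetric]) (use rvX rvY Db in \<open>auto intro: measurable_Pair\<close>)
  also have "\<dots> = emeasure (distr M borel X \<Otimes>\<^sub>M distr M borel Y) D" by (simp add: eq)
  also have "\<dots> = (\<integral>\<^sup>+x. emeasure (distr M borel Y) (Pair x -` D) \<partial>distr M borel X)"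
    by (rule P.emeasure_pair_measure_alt[OF Db'])
  also have "\<dots> = (\<integral>\<^sup>+x. 0 \<partial>distr M borel X)"
  proof (rule nn_integral_cong)
    fix x :: real
    have "Pair x -` D = {x}" by (auto simp: D_def)
    then have "emeasure (distr M borel Y) (Pair x -` D) = emeasure M (Y -` {x} \<inter> space M)"
      using rvY by (simp add: emeasure_distr)
    also have "Y -` {x} \<inter> space M = {\<omega> \<in> space M. Y \<omega> = x}" by auto
    finally show "emeasure (distr M borel Y) (Pair x -` D) = 0" using atom by simp
  qed
  finally have "emeasure M {\<omega> \<in> space M. X \<omega> = Y \<omega>} = 0" by simp
  then show ?thesis
    by (subst AE_iff_measurable[OF meas]) auto
qed

lemma atomless_density:
  assumes "distributed M lborel V (\<lambda>t. ennreal (f t))"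
  shows "emeasure M {\<omega> \<in> space M. V \<omega> = c} = 0"
proof -
  have Vm: "V \<in> borel_measurable M" using distributed_measurable[OF assms] by simp
  have fm: "(\<lambda>t. ennreal (f t)) \<in> borel_measurable lborel" using distributed_borel_measurable[OF assms] .
  have "{\<omega> \<in> space M. V \<omega> = c} = V -` {c} \<inter> space M" by auto
  then have "emeasure M {\<omega> \<in> space M. V \<omega> = c} = emeasure (distr M lborel V) {c}"
    using Vm by (simp add: emeasure_distr)
  also have "\<dots> = emeasure (density lborel (\<lambda>t. ennreal (f t))) {c}"
    using distributed_distr_eq_density[OF assms] by simp
  also have "\<dots> = 0"
  proof -
    have ae: "AE x in lborel. x \<noteq> c"
      by (rule AE_I'[where N="{c}"]) (auto intro: finite_imp_null_set_lborel)
    have "AE x in lborel. x \<in> {c} \<longrightarrow> ennreal (f x) = 0" using ae by eventually_elim auto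
    then have "{c} \<in> null_sets (density lborel (\<lambda>t. ennreal (f t)))"
      unfolding null_sets_density_iff[OF fm] by simp
    then show ?thesis by auto
  qed
  finally show ?thesis .
qed

lemma (in prob_space) single_weight_tie:
  fixes W :: "pt \<Rightarrow> 'a \<Rightarrow> real"
  assumes ind: "indep_vars (\<lambda>_. borel) W UNIV"
    and atom: "\<And>c. emeasure M {\<omega> \<in> space M. W z \<omega> = c} = 0"
    and Zm: "Z \<in> borel_measurable (PiM UNIV (\<lambda>_. borel))"
    and Zloc: "\<And>w t. Z (w(z := t)) = Z w"
  shows "AE \<omega> in M. Z (\<lambda>q. W q \<omega>) \<noteq> W z \<omega>"
proof -
  define K where "K = UNIV - {z}"
  have ind2: "indep_var (PiM K (\<lambda>_. borel)) (\<lambda>\<omega>. restrict (\<lambda>i. W i \<omega>) K)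
                        (PiM {z} (\<lambda>_. borel)) (\<lambda>\<omega>. restrict (\<lambda>i. W i \<omega>) {z})"
    by (rule indep_var_restrict[OF ind]) (auto simp: K_def)
  have extm: "(\<lambda>g r. if r = z then 0 else g r) \<in> measurable (PiM K (\<lambda>_. borel)) (PiM UNIV (\<lambda>_. borel :: real measure))"
  proof (rule measurable_PiM_single')
    fix i :: pt
    show "(\<lambda>g. if i = z then 0 else g i) \<in> measurable (PiM K (\<lambda>_. borel)) borel"
    proof (cases "i = z")
      case True then show ?thesis by simp
    next
      case False then have "i \<in> K" by (simp add: K_def)
      then show ?thesis using False by simp
    qed
  qed simp
  have ind3: "indep_var borel (Z \<circ> (\<lambda>g r. if r = z then 0 else g r) \<circ> (\<lambda>\<omega>. restrict (\<lambda>i. W i \<omega>) K))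
      borel ((\<lambda>f. f z) \<circ> (\<lambda>\<omega>. restrict (\<lambda>i. W i \<omega>) {z}))"
    using indep_var_compose[OF ind2 measurable_comp[OF extm Zm] measurable_component_singleton[of z "{z}" "\<lambda>_. borel"]]
    by simp
  have e1: "Z \<circ> (\<lambda>g r. if r = z then 0 else g r) \<circ> (\<lambda>\<omega>. restrict (\<lambda>i. W i \<omega>) K) = (\<lambda>\<omega>. Z (\<lambda>q. W q \<omega>))"
  proof
    fix \<omega>
    have "(\<lambda>r. if r = z then 0 else restrict (\<lambda>i. W i \<omega>) K r) = (\<lambda>q. W q \<omega>)(z := 0)"
      by (auto simp: K_def)
    then show "(Z \<circ> (\<lambda>g r. if r = z then 0 else g r) \<circ> (\<lambda>\<omega>. restrict (\<lambda>i. W i \<omega>) K)) \<omega> = Z (\<lambda>q. W q \<omega>)"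
      by (simp add: Zloc)
  qed
  have e2: "(\<lambda>f. f z) \<circ> (\<lambda>\<omega>. restrict (\<lambda>i. W i \<omega>) {z}) = W z" by auto
  have "indep_var borel (\<lambda>\<omega>. Z (\<lambda>q. W q \<omega>)) borel (W z)" using ind3 unfolding e1 e2 .
  then show ?thesis by (rule no_tie) (rule atom)
qed

locale stair =
  fixes x :: "int \<Rightarrow> int"
  assumes dec: "\<And>k. x (k + 1) < x k" and x0: "x 0 = 1" and x1: "x 1 < -1"
begin

lemma x_mono: "k \<le> l \<Longrightarrow> x l + (l - k) \<le> x k"
proof (induction l rule: int_ge_induct)
  case base then show ?case by simp
next
  case (step i) then show ?case using dec[of i] by simp
qed

lemma Lminus_mem: "r \<in> Lminus x \<Longrightarrow> snd r \<le> 0 \<and> 1 \<le> fst r"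
proof -
  assume "r \<in> Lminus x"
  then obtain k where k: "r = (k + x k, k)" "k \<le> 0" by (auto simp: Lminus_def)
  with x_mono[of k 0] x0 show ?thesis by simp
qed

lemma Lplus_mem: "r \<in> Lplus x \<Longrightarrow> 1 \<le> snd r \<and> fst r \<le> -1"
proof -
  assume "r \<in> Lplus x"
  then obtain k where k: "r = (k + x k, k)" "k > 0" by (auto simp: Lplus_def)
  with x_mono[of 1 k] x1 show ?thesis by simp
qed

lemma Lminus_row0: "(a, 0) \<in> Lminus x \<Longrightarrow> a = 1"
  using x0 by (auto simp: Lminus_def)

lemma Lminus_10: "(1, 0) \<in> Lminus x"
  using x0 unfolding Lminus_def by (auto intro!: exI[of _ 0])

lemma Lm_left: "fst q \<le> 0 \<Longrightarrow> LPP w (Lminus x) {q} = -\<infinity>"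
  by (rule LPP_unreach) (use Lminus_mem in \<open>fastforce simp: ple_def\<close>)

lemma Lp_low: "snd q \<le> 0 \<Longrightarrow> LPP w (Lplus x) {q} = -\<infinity>"
  by (rule LPP_unreach) (use Lplus_mem in \<open>fastforce simp: ple_def\<close>)

lemma Lm_pos: "1 \<le> fst q \<Longrightarrow> 0 \<le> snd q \<Longrightarrow> LPP w (Lminus x) {q} > -\<infinity>"
proof (induction "nat (fst q - 1 + snd q)" arbitrary: q)
  case 0
  then have "q = (1, 0)" by (cases q) auto
  have "ereal (pval w (Lminus x) [(1,0)]) \<le> LPP w (Lminus x) {(1,0)}"
    by (rule LPP_ge) (auto simp: up_right_path_def Lminus_10)
  then show ?case using \<open>q = (1,0)\<close> by auto
next
  case (Suc n)
  have nq: "q \<notin> Lminus x"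
  proof
    assume "q \<in> Lminus x"
    have "snd q = 0" using Lminus_mem[OF \<open>q \<in> Lminus x\<close>] Suc.prems by simp
    with Lminus_row0[of "fst q"] \<open>q \<in> Lminus x\<close> have "fst q = 1" by (cases q) auto
    with \<open>snd q = 0\<close> Suc(2) show False by simp
  qed
  show ?case
  proof (cases "snd q = 0")
    case True
    then have "fst q \<ge> 2" using Suc by simp
    then have "LPP w (Lminus x) {(fst q - 1, snd q)} > -\<infinity>" using Suc True by (intro Suc.hyps) auto
    then show ?thesis unfolding LPP_rec[OF nq] by (intro plus_max_gt) simp
  next
    case False
    then have "LPP w (Lminus x) {(fst q, snd q - 1)} > -\<infinity>" using Suc by (intro Suc.hyps) auto
    then show ?thesis unfolding LPP_rec[OF nq] by (intro plus_max_gt) simp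
  qed
qed

lemma Lp_fin: "LPP w (Lplus x) {q} < \<infinity>"
proof -
  define B where "B = {snd q + x (snd q) .. fst q} \<times> {1 .. snd q}"
  have finB: "finite B" unfolding B_def by simp
  have "LPP w (Lplus x) {q} \<le> ereal (\<Sum>r\<in>B. \<bar>w r\<bar>)"
    unfolding LPP_alt
  proof (rule SUP_least)
    fix p assume "p \<in> Paths (Lplus x) q"
    then have p: "up_right_path p" "hd p \<in> Lplus x" "last p = q" by (auto simp: Paths_def)
    then obtain k where k: "hd p = (k + x k, k)" "k > 0" by (auto simp: Lplus_def)
    have sub: "set p \<subseteq> B"
    proof
      fix r assume r: "r \<in> set p"
      have "ple (hd p) r" "ple r q" using path_hd_le[OF p(1) r] path_le_last[OF p(1) r] p(3) by auto
      moreover have "k \<le> snd q" using calculation k by (auto simp: ple_def)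
      ultimately show "r \<in> B" using x_mono[of k "snd q"] k unfolding B_def ple_def by (cases r) (auto simp: mem_Times_iff)
    qed
    have "pval w (Lplus x) p \<le> (\<Sum>r\<in>set p - Lplus x. \<bar>w r\<bar>)"
      unfolding pval_def by (rule sum_mono) simp
    also have "\<dots> \<le> (\<Sum>r\<in>B. \<bar>w r\<bar>)"
      by (rule sum_mono2[OF finB]) (use sub in auto)
    finally show "ereal (pval w (Lplus x) p) \<le> ereal (\<Sum>r\<in>B. \<bar>w r\<bar>)" by simp
  qed
  then show ?thesis using le_less_trans by fastforce
qed

abbreviation Lp where "Lp w q \<equiv> LPP w (Lplus x) {q}"
abbreviation Lm where "Lm w q \<equiv> LPP w (Lminus x) {q}"

lemma prop_minus:
  assumes "q \<notin> Lplus x" "Lp w (fst q - 1, snd q) \<le> Lm w (fst q - 1, snd q)"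
    "Lp w (fst q, snd q - 1) \<le> Lm w (fst q, snd q - 1)"
  shows "Lp w q \<le> Lm w q"
proof (cases "q \<in> Lminus x")
  case True
  then have "Lp w q = -\<infinity>" using Lminus_mem Lp_low by blast
  then show ?thesis by simp
next
  case False
  show ?thesis unfolding LPP_rec[OF False] LPP_rec[OF assms(1)]
    by (intro add_left_mono max.mono assms(2,3))
qed

lemma prop_plus:
  assumes "q \<notin> Lminus x" "Lm w (fst q - 1, snd q) \<le> Lp w (fst q - 1, snd q)"
    "Lm w (fst q, snd q - 1) \<le> Lp w (fst q, snd q - 1)"
  shows "Lm w q \<le> Lp w q"
proof (cases "q \<in> Lplus x")
  case True
  then have "Lm w q = -\<infinity>" using Lplus_mem[OF True] Lm_left by simp
  then show ?thesis by simp
next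
  case False
  show ?thesis unfolding LPP_rec[OF False] LPP_rec[OF assms(1)]
    by (intro add_left_mono max.mono assms(2,3))
qed

lemma ci_Suc: "comp_interface x w (Suc n) =
  (if (fst (comp_interface x w n) + 1, snd (comp_interface x w n) + 1) \<in> Gamma_plus x w
   then (fst (comp_interface x w n) + 1, snd (comp_interface x w n))
   else (fst (comp_interface x w n), snd (comp_interface x w n) + 1))"
  by (simp add: Let_def split_beta)

lemma ci_sum: "fst (comp_interface x w n) + snd (comp_interface x w n) = int n \<and>
   0 \<le> fst (comp_interface x w n) \<and> 0 \<le> snd (comp_interface x w n)"
  by (induction n) (auto simp del: comp_interface.simps(2) simp add: ci_Suc)

definition Inv :: "(pt \<Rightarrow> real) \<Rightarrow> nat \<Rightarrow> bool" where
  "Inv w n \<longleftrightarrow> (let I = fst (comp_interface x w n); J = snd (comp_interface x w n) in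
     (\<forall>i<I. Lm w (i, int n - i) \<le> Lp w (i, int n - i)) \<and>
     (\<forall>i>I. Lp w (i, int n - i) \<le> Lm w (i, int n - i)) \<and>
     Lm w (I, J + 1) \<le> Lp w (I, J + 1) \<and>
     Lp w (I + 1, J) \<le> Lm w (I + 1, J))"

lemma Inv_all: "Inv w n"
proof (induction n)
  case 0
  show ?case unfolding Inv_def
    by (auto simp: Lm_left Lp_low)
next
  case (Suc n)
  define I where "I = fst (comp_interface x w n)"
  define J where "J = snd (comp_interface x w n)"
  define d where "d = int n"
  have IJ: "I + J = d" "0 \<le> I" "0 \<le> J" using ci_sum[of w n] unfolding I_def J_def d_def by auto
  have a: "\<And>i. i < I \<Longrightarrow> Lm w (i, d - i) \<le> Lp w (i, d - i)"
   and b: "\<And>i. i > I \<Longrightarrow> Lp w (i, d - i) \<le> Lm w (i, d - i)"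
   and c: "Lm w (I, J + 1) \<le> Lp w (I, J + 1)"
   and dd: "Lp w (I + 1, J) \<le> Lm w (I + 1, J)"
    using Suc.IH unfolding Inv_def I_def J_def d_def Let_def by auto
  have nm: "\<And>i j. j \<ge> 1 \<Longrightarrow> (i, j) \<notin> Lminus x" using Lminus_mem by force
  have np: "\<And>i j. i \<ge> 0 \<Longrightarrow> (i, j) \<notin> Lplus x" using Lplus_mem by force
  have A: "\<And>i. i < I \<Longrightarrow> Lm w (i, d + 1 - i) \<le> Lp w (i, d + 1 - i)"
  proof -
    fix i assume "i < I"
    show "Lm w (i, d + 1 - i) \<le> Lp w (i, d + 1 - i)"
      by (rule prop_plus) (use \<open>i < I\<close> IJ a[of "i - 1"] a[of i] nm in \<open>auto simp: algebra_simps\<close>)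
  qed
  have B: "\<And>i. i > I + 1 \<Longrightarrow> Lp w (i, d + 1 - i) \<le> Lm w (i, d + 1 - i)"
  proof -
    fix i assume "i > I + 1"
    show "Lp w (i, d + 1 - i) \<le> Lm w (i, d + 1 - i)"
      by (rule prop_minus) (use \<open>i > I + 1\<close> IJ b[of "i - 1"] b[of i] np in \<open>auto simp: algebra_simps\<close>)
  qed
  show ?case
  proof (cases "(I + 1, J + 1) \<in> Gamma_plus x w")
    case True
    then have phi: "comp_interface x w (Suc n) = (I + 1, J)" unfolding ci_Suc I_def J_def by simp
    have a': "\<forall>i<I + 1. Lm w (i, d + 1 - i) \<le> Lp w (i, d + 1 - i)"
    proof (intro allI impI)
      fix i assume "i < I + 1"
      then consider "i < I" | "i = I" by linarith
      then show "Lm w (i, d + 1 - i) \<le> Lp w (i, d + 1 - i)"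
      proof cases
        case 1 then show ?thesis by (rule A)
      next
        case 2
        then have "(i, d + 1 - i) = (I, J + 1)" using IJ by simp
        then show ?thesis using c by metis
      qed
    qed
    have c': "Lm w (I + 1, J + 1) \<le> Lp w (I + 1, J + 1)" using True by (simp add: Gamma_plus_def)
    have d': "Lp w (I + 1 + 1, J) \<le> Lm w (I + 1 + 1, J)"
      by (rule prop_minus) (use IJ dd B[of "I + 2"] np in \<open>auto simp: algebra_simps\<close>)
    have d1: "int (Suc n) = d + 1" by (simp add: d_def)
    show ?thesis unfolding Inv_def phi Let_def fst_conv snd_conv d1 using a' B c' d' by blast
  next
    case False
    then have phi: "comp_interface x w (Suc n) = (I, J + 1)" unfolding ci_Suc I_def J_def by simp
    have b': "\<forall>i>I. Lp w (i, d + 1 - i) \<le> Lm w (i, d + 1 - i)"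
    proof (intro allI impI)
      fix i assume "i > I"
      then consider "i > I + 1" | "i = I + 1" by linarith
      then show "Lp w (i, d + 1 - i) \<le> Lm w (i, d + 1 - i)"
      proof cases
        case 1 then show ?thesis by (rule B)
      next
        case 2
        then have "(i, d + 1 - i) = (I + 1, J)" using IJ by simp
        then show ?thesis using dd by metis
      qed
    qed
    have d': "Lp w (I + 1, J + 1) \<le> Lm w (I + 1, J + 1)" using False by (simp add: Gamma_plus_def not_less)
    have c': "Lm w (I, J + 1 + 1) \<le> Lp w (I, J + 1 + 1)"
      by (rule prop_plus) (use IJ c A[of "I - 1"] nm in \<open>auto simp: algebra_simps\<close>)
    have d1: "int (Suc n) = d + 1" by (simp add: d_def)
    show ?thesis unfolding Inv_def phi Let_def fst_conv snd_conv d1 using A b' c' d' by blast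
  qed
qed

lemma ereal_plus_max_eq:
  fixes A B :: ereal
  assumes "ereal a + max A B = ereal b"
  shows "A = ereal (b - a) \<or> B = ereal (b - a)"
proof -
  have "max A B = ereal (b - a)" using assms by (cases "max A B") auto
  then show ?thesis by (auto simp: max_def split: if_splits)
qed

definition loc1 :: "((pt \<Rightarrow> real) \<Rightarrow> real) \<Rightarrow> bool" where
  "loc1 c \<longleftrightarrow> (\<forall>w w'. (\<forall>q. 1 \<le> fst q \<longrightarrow> w q = w' q) \<longrightarrow> c w = c w')"

lemma tie_base:
  assumes ps: "prob_space M" and ind: "prob_space.indep_vars M (\<lambda>_. borel) W UNIV"
    and atom: "\<And>z c. emeasure M {\<omega> \<in> space M. W z \<omega> = c} = 0"
    and cm: "c \<in> borel_measurable (PiM UNIV (\<lambda>_. borel))" and cl: "loc1 c"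
  shows "AE \<omega> in M. Lp (\<lambda>q. W q \<omega>) (0, r) \<noteq> ereal (c (\<lambda>q. W q \<omega>))"
proof -
  define z where "z = ((0::int), r)"
  define Y where "Y w = max (Lp w (-1, r)) (Lp w (0, r - 1))" for w
  define Z where "Z w = c w - real_of_ereal (Y w)" for w
  have Ym: "Y \<in> borel_measurable (PiM UNIV (\<lambda>_. borel))"
    unfolding Y_def
    by (intro borel_measurable_max LPP_measurable[where g="\<lambda>q w. w q"] measurable_component_singleton) simp_all
  have Zm: "Z \<in> borel_measurable (PiM UNIV (\<lambda>_. borel))"
    unfolding Z_def by (intro borel_measurable_diff cm borel_measurable_real_of_ereal Ym)
  have Zloc: "Z (w(z := t)) = Z w" for w t
  proof -
    have "c (w(z := t)) = c w" using cl unfolding loc1_def z_def by auto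
    moreover have "Y (w(z := t)) = Y w"
      unfolding Y_def
      by (intro arg_cong2[where f=max] LPP_local) (auto simp: z_def ple_def)
    ultimately show ?thesis by (simp add: Z_def)
  qed
  have nz: "z \<notin> Lplus x" using Lplus_mem by (force simp: z_def)
  have ae: "AE \<omega> in M. Z (\<lambda>q. W q \<omega>) \<noteq> W z \<omega>"
    by (rule prob_space.single_weight_tie[OF ps ind atom Zm Zloc])
  then show ?thesis
  proof eventually_elim
    case (elim \<omega>)
    show ?case
    proof
      assume H: "Lp (\<lambda>q. W q \<omega>) (0, r) = ereal (c (\<lambda>q. W q \<omega>))"
      have "Lp (\<lambda>q. W q \<omega>) z = ereal (W z \<omega>) + Y (\<lambda>q. W q \<omega>)"
        using LPP_rec[OF nz] by (simp add: Y_def z_def)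
      with H have "ereal (W z \<omega>) + Y (\<lambda>q. W q \<omega>) = ereal (c (\<lambda>q. W q \<omega>))" by (simp add: z_def)
      then have "Y (\<lambda>q. W q \<omega>) = ereal (c (\<lambda>q. W q \<omega>) - W z \<omega>)"
        by (cases "Y (\<lambda>q. W q \<omega>)") auto
      then have "Z (\<lambda>q. W q \<omega>) = W z \<omega>" by (simp add: Z_def)
      with elim show False by simp
    qed
  qed
qed

lemma tie_claim:
  assumes ps: "prob_space M" and ind: "prob_space.indep_vars M (\<lambda>_. borel) W UNIV"
    and atom: "\<And>z c. emeasure M {\<omega> \<in> space M. W z \<omega> = c} = 0"
  shows "1 \<le> fst p \<Longrightarrow> c \<in> borel_measurable (PiM UNIV (\<lambda>_. borel)) \<Longrightarrow> loc1 c \<Longrightarrow>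
    AE \<omega> in M. Lp (\<lambda>q. W q \<omega>) p \<noteq> ereal (c (\<lambda>q. W q \<omega>))"
proof (induction "nat (fst p + snd p)" arbitrary: p c rule: less_induct)
  case less
  show ?case
  proof (cases "snd p \<le> 0")
    case True
    then show ?thesis using Lp_low by (intro AE_I2) simp
  next
    case False
    define c' where "c' w = c w - w p" for w
    have c'm: "c' \<in> borel_measurable (PiM UNIV (\<lambda>_. borel))"
      unfolding c'_def by (intro borel_measurable_diff less.prems measurable_component_singleton) simp
    have c'l: "loc1 c'"
    proof (unfold loc1_def c'_def, intro allI impI)
      fix w w' :: "pt \<Rightarrow> real" assume H: "\<forall>q. 1 \<le> fst q \<longrightarrow> w q = w' q"
      then have "c w = c w'" using less.prems(3) unfolding loc1_def by blast
      moreover have "w p = w' p" using H less.prems(1) by blast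
      ultimately show "c w - w p = c w' - w' p" by simp
    qed
    have h2: "AE \<omega> in M. Lp (\<lambda>q. W q \<omega>) (fst p, snd p - 1) \<noteq> ereal (c' (\<lambda>q. W q \<omega>))"
      by (rule less.hyps) (use False less.prems c'm c'l in auto)
    have h1: "AE \<omega> in M. Lp (\<lambda>q. W q \<omega>) (fst p - 1, snd p) \<noteq> ereal (c' (\<lambda>q. W q \<omega>))"
    proof (cases "fst p = 1")
      case True
      show ?thesis using tie_base[OF ps ind atom c'm c'l, of "snd p"] True by simp
    next
      case False
      show ?thesis
        by (rule less.hyps) (use False \<open>\<not> snd p \<le> 0\<close> less.prems c'm c'l in auto)
    qed
    have np: "p \<notin> Lplus x"
    proof
      assume "p \<in> Lplus x" then show False using Lplus_mem[of p] less.prems(1) by simp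
    qed
    from h1 h2 show ?thesis
    proof eventually_elim
      case (elim \<omega>)
      show ?case
      proof
        assume "Lp (\<lambda>q. W q \<omega>) p = ereal (c (\<lambda>q. W q \<omega>))"
        then have "ereal (W p \<omega>) + max (Lp (\<lambda>q. W q \<omega>) (fst p - 1, snd p)) (Lp (\<lambda>q. W q \<omega>) (fst p, snd p - 1))
           = ereal (c (\<lambda>q. W q \<omega>))" using LPP_rec[OF np] by simp
        from ereal_plus_max_eq[OF this] elim show False by (simp add: c'_def)
      qed
    qed
  qed
qed

lemma tie_null:
  assumes ps: "prob_space M" and ind: "prob_space.indep_vars M (\<lambda>_. borel) W UNIV"
    and atom: "\<And>z c. emeasure M {\<omega> \<in> space M. W z \<omega> = c} = 0"
    and q: "1 \<le> fst q" "0 \<le> snd q"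
  shows "AE \<omega> in M. Lp (\<lambda>r. W r \<omega>) q \<noteq> Lm (\<lambda>r. W r \<omega>) q"
proof -
  define c where "c w = real_of_ereal (Lm w q)" for w
  have cm: "c \<in> borel_measurable (PiM UNIV (\<lambda>_. borel))"
    unfolding c_def
    by (intro borel_measurable_real_of_ereal LPP_measurable[where g="\<lambda>q w. w q"] measurable_component_singleton) simp
  have cl: "loc1 c"
    unfolding loc1_def c_def
  proof (intro allI impI)
    fix w w' :: "pt \<Rightarrow> real" assume H: "\<forall>q. 1 \<le> fst q \<longrightarrow> w q = w' q"
    have "Lm w q = Lm w' q"
    proof (rule LPP_local)
      fix r assume "\<exists>s\<in>Lminus x. ple s r"
      then have "1 \<le> fst r" using Lminus_mem by (force simp: ple_def)
      with H show "w r = w' r" by blast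
    qed
    then show "real_of_ereal (Lm w q) = real_of_ereal (Lm w' q)" by simp
  qed
  have "AE \<omega> in M. Lp (\<lambda>r. W r \<omega>) q \<noteq> ereal (c (\<lambda>r. W r \<omega>))"
    by (rule tie_claim[OF ps ind atom q(1) cm cl])
  then show ?thesis
  proof eventually_elim
    case (elim \<omega>)
    have f: "Lp (\<lambda>r. W r \<omega>) q < \<infinity>" by (rule Lp_fin)
    have g: "Lm (\<lambda>r. W r \<omega>) q > -\<infinity>" by (rule Lm_pos) (use q in auto)
    show ?case
    proof (cases "Lm (\<lambda>r. W r \<omega>) q")
      case (real v)
      then show ?thesis using elim by (simp add: c_def)
    qed (use f g in auto)
  qed
qed

lemma det_first:
  assumes "(int m, int n - int m) \<in> Gamma_minus x w"
  shows "fst (comp_interface x w n) \<le> int m"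
proof (rule ccontr)
  assume "\<not> ?thesis"
  then have "Lm w (int m, int n - int m) \<le> Lp w (int m, int n - int m)"
    using Inv_all[of w n] unfolding Inv_def Let_def by auto
  with assms show False by (simp add: Gamma_minus_def)
qed

lemma det_second:
  assumes "fst (comp_interface x w n) \<le> int m"
  shows "Lp w (int m + 1, int n - int m - 1) \<le> Lm w (int m + 1, int n - int m - 1)"
  using Inv_all[of w n] assms unfolding Inv_def Let_def by (auto simp: algebra_simps)

end

theorem proposition2p4:
  fixes M :: "'a measure" and W :: "pt \<Rightarrow> 'a \<Rightarrow> real"
    and x :: "int \<Rightarrow> int" and v :: "int \<Rightarrow> real" and n m :: nat
  assumes "prob_space M"
    and "prob_space.indep_vars M (\<lambda>_. borel) W UNIV"
    and "\<And>i j. distributed M lborel (W (i, j)) (\<lambda>t. ennreal (exponential_density (v j) t))"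
    and "\<And>j. v j > 0"
    and "\<And>k. x (k + 1) < x k"
    and "x 0 = 1"
    and "x 1 < -1"
    and "m + 1 \<le> n"
  shows "measure M {\<omega> \<in> space M. (int m, int n - int m) \<in> Gamma_minus x (\<lambda>q. W q \<omega>)}
           \<le> measure M {\<omega> \<in> space M.
                 fst (comp_interface x (\<lambda>q. W q \<omega>) n) - snd (comp_interface x (\<lambda>q. W q \<omega>) n)
                   \<le> - int n + 2 * int m}
       \<and> measure M {\<omega> \<in> space M.
                 fst (comp_interface x (\<lambda>q. W q \<omega>) n) - snd (comp_interface x (\<lambda>q. W q \<omega>) n)
                   \<le> - int n + 2 * int m}
           \<le> measure M {\<omega> \<in> space M. (int m + 1, int n - int m - 1) \<in> Gamma_minus x (\<lambda>q. W q \<omega>)}"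
proof -
  note ps = assms(1)
  interpret P: prob_space M by (rule ps)
  interpret S: stair x by unfold_locales (use assms(5-7) in auto)
  have Wm: "W q \<in> borel_measurable M" for q
    using distributed_measurable[OF assms(3)[of "fst q" "snd q"]] by simp
  have atom: "emeasure M {\<omega> \<in> space M. W z \<omega> = c} = 0" for z c
    using atomless_density[OF assms(3)[of "fst z" "snd z"]] by simp
  have sumI: "fst (comp_interface x (\<lambda>q. W q \<omega>) n) + snd (comp_interface x (\<lambda>q. W q \<omega>) n) = int n" for \<omega>
    using S.ci_sum by blast
  have Bs: "{\<omega> \<in> space M. fst (comp_interface x (\<lambda>q. W q \<omega>) n) - snd (comp_interface x (\<lambda>q. W q \<omega>) n)
                   \<le> - int n + 2 * int m} \<in> sets M"
    by (rule ci_event_sets[where P="\<lambda>c. fst c - snd c \<le> - int n + 2 * int m", OF Wm])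
  have Cs: "{\<omega> \<in> space M. (int m + 1, int n - int m - 1) \<in> Gamma_minus x (\<lambda>q. W q \<omega>)} \<in> sets M"
    by (rule Gminus_sets[OF Wm])
  have first: "measure M {\<omega> \<in> space M. (int m, int n - int m) \<in> Gamma_minus x (\<lambda>q. W q \<omega>)}
           \<le> measure M {\<omega> \<in> space M.
                 fst (comp_interface x (\<lambda>q. W q \<omega>) n) - snd (comp_interface x (\<lambda>q. W q \<omega>) n)
                   \<le> - int n + 2 * int m}"
  proof (rule P.finite_measure_mono_AE[OF AE_I2 Bs])
    fix \<omega> assume "\<omega> \<in> space M"
    show "\<omega> \<in> {\<omega> \<in> space M. (int m, int n - int m) \<in> Gamma_minus x (\<lambda>q. W q \<omega>)} \<longrightarrow>
          \<omega> \<in> {\<omega> \<in> space M. fst (comp_interface x (\<lambda>q. W q \<omega>) n) - snd (comp_interface x (\<lambda>q. W q \<omega>) n)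
                   \<le> - int n + 2 * int m}"
      using S.det_first[of m n "\<lambda>q. W q \<omega>"] sumI[of \<omega>] by auto
  qed
  have ae: "AE \<omega> in M. S.Lp (\<lambda>r. W r \<omega>) (int m + 1, int n - int m - 1) \<noteq> S.Lm (\<lambda>r. W r \<omega>) (int m + 1, int n - int m - 1)"
    by (rule S.tie_null[OF ps assms(2) atom]) (use assms(8) in auto)
  have second: "measure M {\<omega> \<in> space M.
                 fst (comp_interface x (\<lambda>q. W q \<omega>) n) - snd (comp_interface x (\<lambda>q. W q \<omega>) n)
                   \<le> - int n + 2 * int m}
           \<le> measure M {\<omega> \<in> space M. (int m + 1, int n - int m - 1) \<in> Gamma_minus x (\<lambda>q. W q \<omega>)}"
  proof (rule P.finite_measure_mono_AE[OF _ Cs])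
    from ae show "AE \<omega> in M. \<omega> \<in> {\<omega> \<in> space M. fst (comp_interface x (\<lambda>q. W q \<omega>) n) - snd (comp_interface x (\<lambda>q. W q \<omega>) n)
                   \<le> - int n + 2 * int m} \<longrightarrow>
          \<omega> \<in> {\<omega> \<in> space M. (int m + 1, int n - int m - 1) \<in> Gamma_minus x (\<lambda>q. W q \<omega>)}"
    proof eventually_elim
      case (elim \<omega>)
      show ?case
      proof
        assume H: "\<omega> \<in> {\<omega> \<in> space M. fst (comp_interface x (\<lambda>q. W q \<omega>) n) - snd (comp_interface x (\<lambda>q. W q \<omega>) n)
                   \<le> - int n + 2 * int m}"
        then have "fst (comp_interface x (\<lambda>q. W q \<omega>) n) \<le> int m" using sumI[of \<omega>] by auto
        from S.det_second[OF this] elim H show "\<omega> \<in> {\<omega> \<in> space M. (int m + 1, int n - int m - 1) \<in> Gamma_minus x (\<lambda>q. W q \<omega>)}"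
          by (auto simp: Gamma_minus_def)
      qed
    qed
  qed
  from first second show ?thesis by blast
qed

end
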